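(* Let $f:\mathbb{C}^2\to\mathbb{C}$ be a convenient mixed polynomial that is strongly Newton non-degenerate in Oka's sense. Then $f$ has a strongly Newton inner non-degenerate boundary.
   Context: Mixed polynomials: $f=\sum c_{\nu,\mu}z^\nu\bar z^\mu$ with $z=(u,v)\in\mathbb{C}^2$, $z^\nu=u^{\nu_1}v^{\nu_2}$, $\bar z^\mu=\bar u^{\mu_1}\bar v^{\mu_2}$, regarded as a real map $\mathbb{R}^4\to\mathbb{R}^2$. $\Sigma_f$ (the critical points) is the common zero set of $f_u\overline{f_{\bar v}}-\overline{f_{\bar u}}f_v$, $|f_u|^2-|f_{\bar u}|^2$, $|f_v|^2-|f_{\bar v}|^2$ (Wirtinger derivatives), equivalently where the real Jacobian has rank $<2$. $(\mathbb{C}^* )^2=(\mathbb{C}\setminus\{0\})^2$. Newton data: $\mathrm{supp}(f)=\{\nu+\mu:c_{\nu,\mu}\ne0\}$; $\Gamma_+(f)$ = convex hull of $\bigcup_{w\in\mathrm{supp}(f)}(w+\mathbb{R}^2_{\ge0})$, with $N\ge1$ compact 1-faces; $\Gamma(f)$ = lattice points on compact faces. $f$ is convenient if $\Gamma(f)$ meets both coordinate axes. For a compact face $\Delta$ (vertex or edge), $f_\Delta$ = sum of terms with $\nu+\mu\in\Delta$. Compact 1-faces $\Delta(P_1),\dots,\Delta(P_N)$, $P_i=(p_{i,1},p_{i,2})$ primitive positive weight vector orthogonal to the edge, ordered so $p_{i,1}/p_{i,2}$ strictly decreases; $f_{P_i}:=f_{\Delta(P_i)}$. A vertex is extreme if on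 exactly one compact 1-face, non-extreme if on two. $f$ is strongly Newton non-degenerate (Oka) if $\Sigma_{f_\Delta}\cap(\mathbb{C}^* )^2=\emptyset$ for every compact face $\Delta$ (vertices and edges). $f$ has a strongly Newton inner non-degenerate boundary if (i) $f_{P_1}$ has no critical points in $\mathbb{C}^2\setminus\{v=0\}$ and $f_{P_N}$ none in $\mathbb{C}^2\setminus\{u=0\}$; (ii) for each compact 1-face and non-extreme vertex $\Delta$, $f_\Delta$ has no critical points in $(\mathbb{C}^* )^2$. *)

theory Defs
  imports "HOL-Analysis.Analysis"
begin

text \<open>A mixed polynomial in z = (u,v): coefficient function indexed by
  (nu, mu) = ((nu1,nu2),(mu1,mu2)); the term is c * u^nu1 v^nu2 conj(u)^mu1 conj(v)^mu2.
  Finiteness of the support is assumed separately.\<close>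

type_synonym mpoly = "(nat \<times> nat) \<times> (nat \<times> nat) \<Rightarrow> complex"

definition mp_eval :: "mpoly \<Rightarrow> complex \<times> complex \<Rightarrow> complex" where
  "mp_eval f z = (\<Sum>k\<in>{k. f k \<noteq> 0}.
      f k * fst z ^ fst (fst k) * snd z ^ snd (fst k)
          * cnj (fst z) ^ fst (snd k) * cnj (snd z) ^ snd (snd k))"

definition mp_du :: "mpoly \<Rightarrow> mpoly" where
  "mp_du f = (\<lambda>((a,b),m). of_nat (a+1) * f ((a+1,b),m))"
definition mp_dv :: "mpoly \<Rightarrow> mpoly" where
  "mp_dv f = (\<lambda>((a,b),m). of_nat (b+1) * f ((a,b+1),m))"
definition mp_dubar :: "mpoly \<Rightarrow> mpoly" where
  "mp_dubar f = (\<lambda>(n,(d,e)). of_nat (d+1) * f (n,(d+1,e)))"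
definition mp_dvbar :: "mpoly \<Rightarrow> mpoly" where
  "mp_dvbar f = (\<lambda>(n,(d,e)). of_nat (e+1) * f (n,(d,e+1)))"

definition crit :: "mpoly \<Rightarrow> (complex \<times> complex) set" where
  "crit f = {z.
     mp_eval (mp_du f) z * cnj (mp_eval (mp_dvbar f) z)
       - cnj (mp_eval (mp_dubar f) z) * mp_eval (mp_dv f) z = 0
   \<and> (cmod (mp_eval (mp_du f) z))\<^sup>2 - (cmod (mp_eval (mp_dubar f) z))\<^sup>2 = 0
   \<and> (cmod (mp_eval (mp_dv f) z))\<^sup>2 - (cmod (mp_eval (mp_dvbar f) z))\<^sup>2 = 0}"

definition torus2 :: "(complex \<times> complex) set" where
  "torus2 = {z. fst z \<noteq> 0 \<and> snd z \<noteq> 0}"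

definition supp :: "mpoly \<Rightarrow> (nat \<times> nat) set" where
  "supp f = {(fst (fst k) + fst (snd k), snd (fst k) + snd (snd k)) | k. f k \<noteq> 0}"

definition newton_plus :: "mpoly \<Rightarrow> (real \<times> real) set" where
  "newton_plus f = convex hull
     (\<Union>w\<in>supp f. {x. real (fst w) \<le> fst x \<and> real (snd w) \<le> snd x})"

definition weight :: "nat \<times> nat \<Rightarrow> bool" where
  "weight P \<longleftrightarrow> fst P > 0 \<and> snd P > 0 \<and> coprime (fst P) (snd P)"

definition wdot :: "nat \<times> nat \<Rightarrow> real \<times> real \<Rightarrow> real" where
  "wdot P x = real (fst P) * fst x + real (snd P) * snd x"

definition face :: "mpoly \<Rightarrow> nat \<times> nat \<Rightarrow> (real \<times> real) set" where
  "face f P = {x \<in> newton_plus f. \<forall>y\<in>newton_plus f. wdot P x \<le> wdot P y}"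

text \<open>Compact faces of Gamma_+ are the faces Delta(P), P positive weight.\<close>
definition compact_face :: "mpoly \<Rightarrow> (real \<times> real) set \<Rightarrow> bool" where
  "compact_face f D \<longleftrightarrow> (\<exists>P. weight P \<and> D = face f P \<and> D \<noteq> {})"

definition edge_weight :: "mpoly \<Rightarrow> nat \<times> nat \<Rightarrow> bool" where
  "edge_weight f P \<longleftrightarrow> weight P \<and> (\<exists>x\<in>face f P. \<exists>y\<in>face f P. x \<noteq> y)"

definition first_edge :: "mpoly \<Rightarrow> nat \<times> nat \<Rightarrow> bool" where
  "first_edge f P \<longleftrightarrow> edge_weight f P \<and>
     (\<forall>Q. edge_weight f Q \<longrightarrow> real (fst Q) / real (snd Q) \<le> real (fst P) / real (snd P))"

definition last_edge :: "mpoly \<Rightarrow> nat \<times> nat \<Rightarrow> bool" where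
  "last_edge f P \<longleftrightarrow> edge_weight f P \<and>
     (\<forall>Q. edge_weight f Q \<longrightarrow> real (fst P) / real (snd P) \<le> real (fst Q) / real (snd Q))"

definition nonextreme_vertex :: "mpoly \<Rightarrow> real \<times> real \<Rightarrow> bool" where
  "nonextreme_vertex f w \<longleftrightarrow> (\<exists>P Q. edge_weight f P \<and> edge_weight f Q \<and> P \<noteq> Q
      \<and> w \<in> face f P \<and> w \<in> face f Q)"

definition restr :: "mpoly \<Rightarrow> (real \<times> real) set \<Rightarrow> mpoly" where
  "restr f D = (\<lambda>k. if (real (fst (fst k) + fst (snd k)), real (snd (fst k) + snd (snd k))) \<in> D
                    then f k else 0)"

definition convenient :: "mpoly \<Rightarrow> bool" where
  "convenient f \<longleftrightarrow>
     (\<exists>D a. compact_face f D \<and> (real a, 0) \<in> D) \<and> (\<exists>D b. compact_face f D \<and> (0, real b) \<in> D)"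

definition strongly_newton_nondeg :: "mpoly \<Rightarrow> bool" where
  "strongly_newton_nondeg f \<longleftrightarrow>
     (\<forall>D. compact_face f D \<longrightarrow> crit (restr f D) \<inter> torus2 = {})"

definition strongly_inner_nondeg_boundary :: "mpoly \<Rightarrow> bool" where
  "strongly_inner_nondeg_boundary f \<longleftrightarrow>
     (\<forall>P. first_edge f P \<longrightarrow> crit (restr f (face f P)) \<inter> {z. snd z \<noteq> 0} = {})
   \<and> (\<forall>P. last_edge f P \<longrightarrow> crit (restr f (face f P)) \<inter> {z. fst z \<noteq> 0} = {})
   \<and> (\<forall>P. edge_weight f P \<longrightarrow> crit (restr f (face f P)) \<inter> torus2 = {})
   \<and> (\<forall>w. nonextreme_vertex f w \<longrightarrow> crit (restr f {w}) \<inter> torus2 = {})"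

end

theory Submission
  imports Defs
begin


lemma halfspace_convex: "convex {y. c \<le> wdot q y}"
  unfolding convex_def
proof (clarify)
  fix x y :: "real \<times> real" and u v :: real
  assume h: "c \<le> wdot q x" "c \<le> wdot q y" "0 \<le> u" "0 \<le> v" "u + v = 1"
  have e: "wdot q (u *\<^sub>R x + v *\<^sub>R y) = u * wdot q x + v * wdot q y"
    by (simp add: wdot_def algebra_simps)
  have "u * c \<le> u * wdot q x" using h by (simp add: mult_left_mono)
  moreover have "v * c \<le> v * wdot q y" using h by (simp add: mult_left_mono)
  ultimately have "u * c + v * c \<le> wdot q (u *\<^sub>R x + v *\<^sub>R y)" using e by linarith
  moreover have "u * c + v * c = c" using h by (metis distrib_right mult_1)
  ultimately show "c \<le> wdot q (u *\<^sub>R x + v *\<^sub>R y)" by simp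
qed

lemma supp_in_gamma: "w \<in> supp f \<Longrightarrow> (real (fst w), real (snd w)) \<in> newton_plus f"
  unfolding newton_plus_def by (rule hull_inc) auto

lemma gamma_lower:
  assumes "\<forall>w\<in>supp f. c \<le> real (fst q) * real (fst w) + real (snd q) * real (snd w)"
    and "y \<in> newton_plus f"
  shows "c \<le> wdot q y"
proof -
  have "newton_plus f \<subseteq> {y. c \<le> wdot q y}"
    unfolding newton_plus_def
  proof (rule hull_minimal)
    show "convex {y. c \<le> wdot q y}" by (rule halfspace_convex)
    show "(\<Union>w\<in>supp f. {x. real (fst w) \<le> fst x \<and> real (snd w) \<le> snd x}) \<subseteq> {y. c \<le> wdot q y}"
    proof
      fix x assume "x \<in> (\<Union>w\<in>supp f. {x. real (fst w) \<le> fst x \<and> real (snd w) \<le> snd x})"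
      then obtain w where w: "w \<in> supp f" "real (fst w) \<le> fst x" "real (snd w) \<le> snd x" by auto
      have "real (fst q) * real (fst w) \<le> real (fst q) * fst x" using w by (simp add: mult_left_mono)
      moreover have "real (snd q) * real (snd w) \<le> real (snd q) * snd x" using w by (simp add: mult_left_mono)
      ultimately show "x \<in> {y. c \<le> wdot q y}" using assms(1) w(1) unfolding wdot_def by force
    qed
  qed
  thus ?thesis using assms(2) by auto
qed

lemma primitive:
  assumes "fst q > 0" "snd q > 0"
  shows "\<exists>R. weight R \<and> face f R = face f q \<and> real (fst R) / real (snd R) = real (fst q) / real (snd q)"
proof -
  define g where "g = gcd (fst q) (snd q)"
  have g0: "g > 0" using assms g_def by simp
  define R where "R = (fst q div g, snd q div g)"
  have q1: "fst q = g * fst R" unfolding R_def g_def by simp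
  have q2: "snd q = g * snd R" unfolding R_def g_def by simp
  have R1: "fst R > 0" using q1 assms(1) by (metis gr0I mult_0_right)
  have R2: "snd R > 0" using q2 assms(2) by (metis gr0I mult_0_right)
  have cop: "coprime (fst R) (snd R)" unfolding R_def g_def
    using div_gcd_coprime assms by (metis fst_conv snd_conv gcd_eq_0_iff less_irrefl)
  have wd: "\<And>x. wdot q x = real g * wdot R x" unfolding wdot_def using q1 q2 by (simp add: algebra_simps)
  have "face f R = face f q" unfolding face_def using wd g0 by auto
  moreover have "real (fst R) / real (snd R) = real (fst q) / real (snd q)"
    using q1 q2 g0 by simp
  ultimately show ?thesis using R1 R2 cop unfolding weight_def by blast
qed



lemma face_two_weights:
  assumes P: "weight P" and Q: "weight Q" and PQ: "P \<noteq> Q"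
    and wP: "w \<in> face f P" and wQ: "w \<in> face f Q"
  shows "\<exists>R. weight R \<and> face f R = {w}"
proof -
  define S where "S = (fst P + fst Q, snd P + snd Q)"
  have S0: "fst S > 0" "snd S > 0" using P unfolding S_def weight_def by auto
  have wS: "\<And>x. wdot S x = wdot P x + wdot Q x" unfolding S_def wdot_def by (simp add: algebra_simps)
  have eqpts: "x = w" if "x \<in> newton_plus f" "wdot P x = wdot P w" "wdot Q x = wdot Q w" for x
  proof -
    have nd: "real (fst P) * real (snd Q) \<noteq> real (snd P) * real (fst Q)"
    proof
      assume "real (fst P) * real (snd Q) = real (snd P) * real (fst Q)"
      hence e: "fst P * snd Q = snd P * fst Q" by (metis of_nat_eq_iff of_nat_mult)
      have c1: "coprime (fst P) (snd P)" "coprime (fst Q) (snd Q)" using P Q unfolding weight_def by auto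
      have "fst P dvd fst Q" using e c1(1)
        by (metis coprime_dvd_mult_right_iff dvd_triv_left mult.commute)
      moreover have "fst Q dvd fst P" using e c1(2)
        by (metis coprime_dvd_mult_right_iff dvd_triv_left mult.commute)
      ultimately have "fst P = fst Q" by (simp add: dvd_antisym)
      moreover then have "snd P = snd Q" using e P unfolding weight_def by simp
      ultimately show False using PQ by (simp add: prod_eq_iff)
    qed
    define a where "a = fst x - fst w"
    define b where "b = snd x - snd w"
    have "real (fst P) * a + real (snd P) * b = 0" using that(2) unfolding wdot_def a_def b_def by (simp add: algebra_simps)
    moreover have "real (fst Q) * a + real (snd Q) * b = 0" using that(3) unfolding wdot_def a_def b_def by (simp add: algebra_simps)
    ultimately have "(real (fst P) * real (snd Q) - real (snd P) * real (fst Q)) * a = 0"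
      "(real (fst P) * real (snd Q) - real (snd P) * real (fst Q)) * b = 0"
      by algebra+
    hence "a = 0" "b = 0" using nd by auto
    thus ?thesis unfolding a_def b_def by (simp add: prod_eq_iff)
  qed
  have "face f S = {w}"
  proof
    show "{w} \<subseteq> face f S"
      using wP wQ unfolding face_def by (auto simp: wS intro: add_mono)
    show "face f S \<subseteq> {w}"
    proof
      fix x assume x: "x \<in> face f S"
      have xg: "x \<in> newton_plus f" and wg: "w \<in> newton_plus f" using x wP unfolding face_def by auto
      have "wdot S x \<le> wdot S w" using x wg unfolding face_def by auto
      moreover have "wdot P w \<le> wdot P x" "wdot Q w \<le> wdot Q x" using wP wQ xg unfolding face_def by auto
      ultimately have "wdot P x = wdot P w" "wdot Q x = wdot Q w" using wS by (smt (verit))+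
      thus "x \<in> {w}" using eqpts xg by auto
    qed
  qed
  then show ?thesis using primitive[OF S0, of f] by metis
qed



lemma vertex_face_y:
  assumes s: "(0, b0) \<in> supp f" and m: "\<forall>y. (0, y) \<in> supp f \<longrightarrow> b0 \<le> y"
  shows "face f (b0 + 1, 1) = {(0, real b0)}" and "weight (b0 + 1, 1)"
proof -
  define s0 where "s0 = ((0::real), real b0)"
  have s0g: "s0 \<in> newton_plus f" using supp_in_gamma[OF s] unfolding s0_def by simp
  have lo: "\<forall>w\<in>supp f. real b0 \<le> real (fst (b0+1,1::nat)) * real (fst w) + real (snd (b0+1,1::nat)) * real (snd w)"
  proof
    fix w assume w: "w \<in> supp f"
    show "real b0 \<le> real (fst (b0+1,1::nat)) * real (fst w) + real (snd (b0+1,1::nat)) * real (snd w)"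
    proof (cases "fst w = 0")
      case True
      then have "b0 \<le> snd w" using m w by (metis prod.collapse)
      then show ?thesis using True by simp
    next
      case False
      then have "1 \<le> real (fst w)" by simp
      then have "(real b0 + 1) * 1 \<le> (real b0 + 1) * real (fst w)"
        by (intro mult_left_mono) auto
      then show ?thesis by (simp add: ring_distribs)
    qed
  qed
  have lo2: "\<forall>w\<in>supp f. real b0 \<le> real (fst (b0,1::nat)) * real (fst w) + real (snd (b0,1::nat)) * real (snd w)"
  proof
    fix w assume w: "w \<in> supp f"
    show "real b0 \<le> real (fst (b0,1::nat)) * real (fst w) + real (snd (b0,1::nat)) * real (snd w)"
    proof (cases "fst w = 0")
      case True
      then have "b0 \<le> snd w" using m w by (metis prod.collapse)
      then show ?thesis using True by simp
    next
      case False
      then have "1 \<le> real (fst w)" by simp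
      then have "real b0 * 1 \<le> real b0 * real (fst w)" by (intro mult_left_mono) auto
      then show ?thesis by simp
    qed
  qed
  have lo3: "\<forall>w\<in>supp f. 0 \<le> real (fst (1,0::nat)) * real (fst w) + real (snd (1,0::nat)) * real (snd w)"
    by simp
  show "face f (b0 + 1, 1) = {(0, real b0)}"
  proof
    show "{(0, real b0)} \<subseteq> face f (b0 + 1, 1)"
      using s0g gamma_lower[OF lo] unfolding face_def s0_def by (auto simp: wdot_def)
    show "face f (b0 + 1, 1) \<subseteq> {(0, real b0)}"
    proof
      fix x assume x: "x \<in> face f (b0 + 1, 1)"
      hence xg: "x \<in> newton_plus f" and "wdot (b0+1,1) x \<le> wdot (b0+1,1) s0" using s0g unfolding face_def by auto
      hence a: "(real b0 + 1) * fst x + snd x \<le> real b0" unfolding s0_def wdot_def by (simp add: add.commute)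
      have b: "real b0 \<le> real b0 * fst x + snd x" using gamma_lower[OF lo2 xg] by (simp add: wdot_def)
      have c: "0 \<le> fst x" using gamma_lower[OF lo3 xg] by (simp add: wdot_def)
      have "fst x = 0" using a b c by (simp add: algebra_simps)
      moreover then have "snd x = real b0" using a b by simp
      ultimately show "x \<in> {(0, real b0)}" by (simp add: prod_eq_iff)
    qed
  qed
  show "weight (b0 + 1, 1)" unfolding weight_def by simp
qed

lemma vertex_face_x:
  assumes s: "(a0, 0) \<in> supp f" and m: "\<forall>y. (y, 0) \<in> supp f \<longrightarrow> a0 \<le> y"
  shows "face f (1, a0 + 1) = {(real a0, 0)}" and "weight (1, a0 + 1)"
proof -
  define s0 where "s0 = (real a0, (0::real))"
  have s0g: "s0 \<in> newton_plus f" using supp_in_gamma[OF s] unfolding s0_def by simp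
  have lo: "\<forall>w\<in>supp f. real a0 \<le> real (fst (1,a0+1::nat)) * real (fst w) + real (snd (1,a0+1::nat)) * real (snd w)"
  proof
    fix w assume w: "w \<in> supp f"
    show "real a0 \<le> real (fst (1,a0+1::nat)) * real (fst w) + real (snd (1,a0+1::nat)) * real (snd w)"
    proof (cases "snd w = 0")
      case True
      then have "a0 \<le> fst w" using m w by (metis prod.collapse)
      then show ?thesis using True by simp
    next
      case False
      then have "1 \<le> real (snd w)" by simp
      then have "(real a0 + 1) * 1 \<le> (real a0 + 1) * real (snd w)"
        by (intro mult_left_mono) auto
      then show ?thesis by (simp add: ring_distribs)
    qed
  qed
  have lo2: "\<forall>w\<in>supp f. real a0 \<le> real (fst (1,a0::nat)) * real (fst w) + real (snd (1,a0::nat)) * real (snd w)"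
  proof
    fix w assume w: "w \<in> supp f"
    show "real a0 \<le> real (fst (1,a0::nat)) * real (fst w) + real (snd (1,a0::nat)) * real (snd w)"
    proof (cases "snd w = 0")
      case True
      then have "a0 \<le> fst w" using m w by (metis prod.collapse)
      then show ?thesis using True by simp
    next
      case False
      then have "1 \<le> real (snd w)" by simp
      then have "real a0 * 1 \<le> real a0 * real (snd w)" by (intro mult_left_mono) auto
      then show ?thesis by simp
    qed
  qed
  have lo3: "\<forall>w\<in>supp f. 0 \<le> real (fst (0,1::nat)) * real (fst w) + real (snd (0,1::nat)) * real (snd w)"
    by simp
  show "face f (1, a0 + 1) = {(real a0, 0)}"
  proof
    show "{(real a0, 0)} \<subseteq> face f (1, a0 + 1)"
      using s0g gamma_lower[OF lo] unfolding face_def s0_def by (auto simp: wdot_def)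
    show "face f (1, a0 + 1) \<subseteq> {(real a0, 0)}"
    proof
      fix x assume x: "x \<in> face f (1, a0 + 1)"
      hence xg: "x \<in> newton_plus f" and "wdot (1, a0+1) x \<le> wdot (1, a0+1) s0" using s0g unfolding face_def by auto
      hence a: "fst x + (real a0 + 1) * snd x \<le> real a0" unfolding s0_def wdot_def by (simp add: add.commute)
      have b: "real a0 \<le> fst x + real a0 * snd x" using gamma_lower[OF lo2 xg] by (simp add: wdot_def)
      have c: "0 \<le> snd x" using gamma_lower[OF lo3 xg] by (simp add: wdot_def)
      have "snd x = 0" using a b c by (simp add: algebra_simps)
      moreover then have "fst x = real a0" using a b by simp
      ultimately show "x \<in> {(real a0, 0)}" by (simp add: prod_eq_iff)
    qed
  qed
  show "weight (1, a0 + 1)" unfolding weight_def by simp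
qed



lemma finite_supp: "finite {k. f k \<noteq> 0} \<Longrightarrow> finite (supp f)"
proof -
  assume "finite {k. f k \<noteq> 0}"
  moreover have "supp f = (\<lambda>k. (fst (fst k) + fst (snd k), snd (fst k) + snd (snd k))) ` {k. f k \<noteq> 0}"
    unfolding supp_def image_def by blast
  ultimately show ?thesis by simp
qed

lemma first_edge_vertex:
  assumes fin: "finite {k. f k \<noteq> 0}" and fe: "first_edge f P" and yb: "(0, real b) \<in> newton_plus f"
  shows "\<exists>b0. (0,b0) \<in> supp f \<and> (\<forall>y. (0,y) \<in> supp f \<longrightarrow> b0 \<le> y) \<and> (0, real b0) \<in> face f P"
proof -
  have ex: "\<exists>y. (0,y) \<in> supp f"
  proof (rule ccontr)
    assume "\<not> ?thesis"
    hence "\<forall>w\<in>supp f. 1 \<le> real (fst (1::nat,0::nat)) * real (fst w) + real (snd (1::nat,0::nat)) * real (snd w)"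
      by (metis fst_conv less_one mult_1 mult_zero_left not_le of_nat_0 of_nat_1 of_nat_le_iff prod.collapse add_0_right snd_conv)
    from gamma_lower[OF this yb] show False by (simp add: wdot_def)
  qed
  define b0 where "b0 = (LEAST y. (0,y) \<in> supp f)"
  have b0s: "(0,b0) \<in> supp f" unfolding b0_def using ex by (metis LeastI)
  have b0m: "\<forall>y. (0,y) \<in> supp f \<longrightarrow> b0 \<le> y" unfolding b0_def by (metis Least_le)
  define s0 where "s0 = ((0::real), real b0)"
  have s0g: "s0 \<in> newton_plus f" using supp_in_gamma[OF b0s] unfolding s0_def by simp
  have wP: "weight P" and ewP: "edge_weight f P" using fe unfolding first_edge_def edge_weight_def by auto
  have p1: "fst P > 0" and p2: "snd P > 0" using wP unfolding weight_def by auto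
  have "s0 \<in> face f P"
  proof (rule ccontr)
    assume ns: "s0 \<notin> face f P"
    have "\<exists>w\<in>supp f. real (fst P) * real (fst w) + real (snd P) * real (snd w) < wdot P s0"
    proof (rule ccontr)
      assume "\<not> ?thesis"
      hence "\<forall>w\<in>supp f. wdot P s0 \<le> real (fst P) * real (fst w) + real (snd P) * real (snd w)" by auto
      from gamma_lower[OF this] have "\<forall>y\<in>newton_plus f. wdot P s0 \<le> wdot P y" by auto
      with s0g ns show False unfolding face_def by auto
    qed
    then obtain w where w: "w \<in> supp f" and wl: "real (fst P) * real (fst w) + real (snd P) * real (snd w) < real (snd P) * real b0"
      unfolding s0_def wdot_def by auto
    have w1: "fst w > 0"
    proof (rule ccontr)
      assume "\<not> fst w > 0"
      hence "fst w = 0" by simp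
      hence "b0 \<le> snd w" using b0m w by (metis prod.collapse)
      hence "real (snd P) * real b0 \<le> real (snd P) * real (snd w)" by (simp add: mult_left_mono)
      thus False using wl \<open>fst w = 0\<close> by simp
    qed
    define S' where "S' = {w \<in> supp f. 0 < fst w}"
    define g where "g = (\<lambda>w::nat\<times>nat. (real b0 - real (snd w)) / real (fst w))"
    have S'f: "finite S'" using finite_supp[OF fin] unfolding S'_def by simp
    have wS': "w \<in> S'" using w w1 unfolding S'_def by simp
    define M where "M = Max (g ` S')"
    have Mge: "\<And>v. v \<in> S' \<Longrightarrow> g v \<le> M" unfolding M_def using S'f by simp
    have "M \<in> g ` S'" using Max_in[of "g ` S'"] S'f wS' unfolding M_def by blast
    then obtain ws where ws: "ws \<in> S'" "g ws = M" by (metis imageE)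
    have gw: "real (fst P) / real (snd P) < g w"
    proof -
      have "real (fst P) * real (fst w) < real (snd P) * (real b0 - real (snd w))"
        using wl by (simp add: algebra_simps)
      thus ?thesis unfolding g_def using w1 p2 by (simp add: field_simps)
    qed
    have Mgt: "real (fst P) / real (snd P) < M" using gw Mge[OF wS'] by linarith
    have ws1: "fst ws > 0" and wss: "ws \<in> supp f" using ws unfolding S'_def by auto
    have "0 < M" using Mgt p1 p2 by (smt (verit) divide_pos_pos of_nat_0_less_iff)
    hence ws2: "snd ws < b0" using ws(2) ws1 unfolding g_def
      by (smt (verit) divide_nonpos_pos of_nat_0_less_iff of_nat_less_iff)
    define q where "q = (b0 - snd ws, fst ws)"
    have q1: "real (fst q) = real b0 - real (snd ws)" unfolding q_def using ws2 by simp
    have q2: "real (snd q) = real (fst ws)" unfolding q_def by simp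
    define c where "c = real (fst ws) * real b0"
    have lo: "\<forall>v\<in>supp f. c \<le> real (fst q) * real (fst v) + real (snd q) * real (snd v)"
    proof
      fix v assume v: "v \<in> supp f"
      show "c \<le> real (fst q) * real (fst v) + real (snd q) * real (snd v)"
      proof (cases "fst v = 0")
        case True
        hence "b0 \<le> snd v" using b0m v by (metis prod.collapse)
        hence "real (fst ws) * real b0 \<le> real (fst ws) * real (snd v)" by (simp add: mult_left_mono)
        thus ?thesis using True q2 unfolding c_def by simp
      next
        case False
        hence "v \<in> S'" using v unfolding S'_def by simp
        hence "g v \<le> g ws" using Mge ws(2) by simp
        hence "(real b0 - real (snd v)) * real (fst ws) \<le> (real b0 - real (snd ws)) * real (fst v)"
          unfolding g_def using False ws1 by (simp add: field_simps)
        thus ?thesis unfolding c_def q1 q2 by (simp add: algebra_simps)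
      qed
    qed
    define pw where "pw = (real (fst ws), real (snd ws))"
    have pwg: "pw \<in> newton_plus f" using supp_in_gamma[OF wss] unfolding pw_def by simp
    have "s0 \<in> face f q" "pw \<in> face f q"
      using s0g pwg gamma_lower[OF lo] unfolding face_def
      by (auto simp: wdot_def s0_def pw_def q1 q2 c_def algebra_simps)
    moreover have "s0 \<noteq> pw" using ws1 unfolding s0_def pw_def by simp
    moreover obtain R where R: "weight R" "face f R = face f q" "real (fst R) / real (snd R) = real (fst q) / real (snd q)"
      using primitive[of q f] ws1 ws2 unfolding q_def by auto
    ultimately have "edge_weight f R" unfolding edge_weight_def by auto
    with fe have "real (fst R) / real (snd R) \<le> real (fst P) / real (snd P)" unfolding first_edge_def by auto
    moreover have "real (fst q) / real (snd q) = M" using ws(2) unfolding g_def q1 q2 by simp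
    ultimately show False using R(3) Mgt by simp
  qed
  thus ?thesis using b0s b0m unfolding s0_def by blast
qed

lemma last_edge_vertex:
  assumes fin: "finite {k. f k \<noteq> 0}" and fe: "last_edge f P" and yb: "(real b, 0) \<in> newton_plus f"
  shows "\<exists>b0. (b0,0) \<in> supp f \<and> (\<forall>y. (y,0) \<in> supp f \<longrightarrow> b0 \<le> y) \<and> (real b0, 0) \<in> face f P"
proof -
  have ex: "\<exists>y. (y,0) \<in> supp f"
  proof (rule ccontr)
    assume "\<not> ?thesis"
    hence "\<forall>w\<in>supp f. 1 \<le> real (fst (0::nat,1::nat)) * real (fst w) + real (snd (0::nat,1::nat)) * real (snd w)"
      by (metis fst_conv less_one mult_1 mult_zero_left not_le of_nat_0 of_nat_1 of_nat_le_iff prod.collapse add_0_left snd_conv)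
    from gamma_lower[OF this yb] show False by (simp add: wdot_def)
  qed
  define b0 where "b0 = (LEAST y. (y,0) \<in> supp f)"
  have b0s: "(b0,0) \<in> supp f" unfolding b0_def using ex by (metis LeastI)
  have b0m: "\<forall>y. (y,0) \<in> supp f \<longrightarrow> b0 \<le> y" unfolding b0_def by (metis Least_le)
  define s0 where "s0 = (real b0, (0::real))"
  have s0g: "s0 \<in> newton_plus f" using supp_in_gamma[OF b0s] unfolding s0_def by simp
  have wP: "weight P" and ewP: "edge_weight f P" using fe unfolding last_edge_def edge_weight_def by auto
  have p1: "fst P > 0" and p2: "snd P > 0" using wP unfolding weight_def by auto
  have "s0 \<in> face f P"
  proof (rule ccontr)
    assume ns: "s0 \<notin> face f P"
    have "\<exists>w\<in>supp f. real (fst P) * real (fst w) + real (snd P) * real (snd w) < wdot P s0"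
    proof (rule ccontr)
      assume "\<not> ?thesis"
      hence "\<forall>w\<in>supp f. wdot P s0 \<le> real (fst P) * real (fst w) + real (snd P) * real (snd w)" by auto
      from gamma_lower[OF this] have "\<forall>y\<in>newton_plus f. wdot P s0 \<le> wdot P y" by auto
      with s0g ns show False unfolding face_def by auto
    qed
    then obtain w where w: "w \<in> supp f" and wl: "real (fst P) * real (fst w) + real (snd P) * real (snd w) < real (fst P) * real b0"
      unfolding s0_def wdot_def by auto
    have w1: "snd w > 0"
    proof (rule ccontr)
      assume "\<not> snd w > 0"
      hence "snd w = 0" by simp
      hence "b0 \<le> fst w" using b0m w by (metis prod.collapse)
      hence "real (fst P) * real b0 \<le> real (fst P) * real (fst w)" by (simp add: mult_left_mono)
      thus False using wl \<open>snd w = 0\<close> by simp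
    qed
    define S' where "S' = {w \<in> supp f. 0 < snd w}"
    define g where "g = (\<lambda>w::nat\<times>nat. (real b0 - real (fst w)) / real (snd w))"
    have S'f: "finite S'" using finite_supp[OF fin] unfolding S'_def by simp
    have wS': "w \<in> S'" using w w1 unfolding S'_def by simp
    define M where "M = Max (g ` S')"
    have Mge: "\<And>v. v \<in> S' \<Longrightarrow> g v \<le> M" unfolding M_def using S'f by simp
    have "M \<in> g ` S'" using Max_in[of "g ` S'"] S'f wS' unfolding M_def by blast
    then obtain ws where ws: "ws \<in> S'" "g ws = M" by (metis imageE)
    have gw: "real (snd P) / real (fst P) < g w"
    proof -
      have "real (snd P) * real (snd w) < real (fst P) * (real b0 - real (fst w))"
        using wl by (simp add: algebra_simps)
      thus ?thesis unfolding g_def using w1 p1 by (simp add: field_simps)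
    qed
    have Mgt: "real (snd P) / real (fst P) < M" using gw Mge[OF wS'] by linarith
    have ws1: "snd ws > 0" and wss: "ws \<in> supp f" using ws unfolding S'_def by auto
    have "0 < M" using Mgt p1 p2 by (smt (verit) divide_pos_pos of_nat_0_less_iff)
    hence ws2: "fst ws < b0" using ws(2) ws1 unfolding g_def
      by (smt (verit) divide_nonpos_pos of_nat_0_less_iff of_nat_less_iff)
    define q where "q = (snd ws, b0 - fst ws)"
    have q2: "real (snd q) = real b0 - real (fst ws)" unfolding q_def using ws2 by simp
    have q1: "real (fst q) = real (snd ws)" unfolding q_def by simp
    define c where "c = real (snd ws) * real b0"
    have lo: "\<forall>v\<in>supp f. c \<le> real (fst q) * real (fst v) + real (snd q) * real (snd v)"
    proof
      fix v assume v: "v \<in> supp f"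
      show "c \<le> real (fst q) * real (fst v) + real (snd q) * real (snd v)"
      proof (cases "snd v = 0")
        case True
        hence "b0 \<le> fst v" using b0m v by (metis prod.collapse)
        hence "real (snd ws) * real b0 \<le> real (snd ws) * real (fst v)" by (simp add: mult_left_mono)
        thus ?thesis using True q1 unfolding c_def by simp
      next
        case False
        hence "v \<in> S'" using v unfolding S'_def by simp
        hence "g v \<le> g ws" using Mge ws(2) by simp
        hence "(real b0 - real (fst v)) * real (snd ws) \<le> (real b0 - real (fst ws)) * real (snd v)"
          unfolding g_def using False ws1 by (simp add: field_simps)
        thus ?thesis unfolding c_def q1 q2 by (simp add: algebra_simps)
      qed
    qed
    define pw where "pw = (real (fst ws), real (snd ws))"
    have pwg: "pw \<in> newton_plus f" using supp_in_gamma[OF wss] unfolding pw_def by simp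
    have "s0 \<in> face f q" "pw \<in> face f q"
      using s0g pwg gamma_lower[OF lo] unfolding face_def
      by (auto simp: wdot_def s0_def pw_def q1 q2 c_def algebra_simps)
    moreover have "s0 \<noteq> pw" using ws1 unfolding s0_def pw_def by simp
    moreover obtain R where R: "weight R" "face f R = face f q" "real (fst R) / real (snd R) = real (fst q) / real (snd q)"
      using primitive[of q f] ws1 ws2 unfolding q_def by auto
    ultimately have "edge_weight f R" unfolding edge_weight_def by auto
    with fe have "real (fst P) / real (snd P) \<le> real (fst R) / real (snd R)" unfolding last_edge_def by auto
    moreover have "real (fst q) / real (snd q) < real (fst P) / real (snd P)"
    proof -
      have "real (snd P) / real (fst P) < (real b0 - real (fst ws)) / real (snd ws)"
        using Mgt ws(2) unfolding g_def by simp
      hence "real (snd P) * real (snd ws) < (real b0 - real (fst ws)) * real (fst P)"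
        using p1 ws1 by (simp add: field_simps)
      moreover have "0 < real b0 - real (fst ws)" using ws2 by simp
      ultimately show ?thesis unfolding q1 q2 using p1 p2 by (simp add: field_simps)
    qed
    ultimately show False using R(3) by simp
  qed
  thus ?thesis using b0s b0m unfolding s0_def by blast
qed



definition tm :: "mpoly \<Rightarrow> complex \<times> complex \<Rightarrow> (nat \<times> nat) \<times> (nat \<times> nat) \<Rightarrow> complex" where
  "tm g z k = g k * fst z ^ fst (fst k) * snd z ^ snd (fst k)
          * cnj (fst z) ^ fst (snd k) * cnj (snd z) ^ snd (snd k)"

lemma eval_sum: "finite A \<Longrightarrow> {k. g k \<noteq> 0} \<subseteq> A \<Longrightarrow> mp_eval g z = (\<Sum>k\<in>A. tm g z k)"
  unfolding mp_eval_def tm_def[abs_def]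
  by (rule sum.mono_neutral_left) auto

lemma eval_zero: "mp_eval (\<lambda>_. 0) z = 0" unfolding mp_eval_def by simp

lemma fin_restr: "finite {k. f k \<noteq> 0} \<Longrightarrow> finite {k. restr f D k \<noteq> 0}"
  by (rule finite_subset[of _ "{k. f k \<noteq> 0}"]) (auto simp: restr_def)

lemma fin_du: "finite {k. g k \<noteq> 0} \<Longrightarrow> finite {k. mp_du g k \<noteq> 0}"
proof -
  assume a: "finite {k. g k \<noteq> 0}"
  have "{k. mp_du g k \<noteq> 0} \<subseteq> (\<lambda>((a,b),m). ((a - 1, b), m)) ` {k. g k \<noteq> 0}"
  proof
    fix k assume "k \<in> {k. mp_du g k \<noteq> 0}"
    then obtain a b m where k: "k = ((a,b),m)" "g ((a+1,b),m) \<noteq> 0" unfolding mp_du_def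
      by (cases k) auto
    then show "k \<in> (\<lambda>((a,b),m). ((a - 1, b), m)) ` {k. g k \<noteq> 0}"
      by (intro image_eqI[of _ _ "((a+1,b),m)"]) auto
  qed
  thus ?thesis using a finite_subset by blast
qed

lemma fin_dv: "finite {k. g k \<noteq> 0} \<Longrightarrow> finite {k. mp_dv g k \<noteq> 0}"
proof -
  assume a: "finite {k. g k \<noteq> 0}"
  have "{k. mp_dv g k \<noteq> 0} \<subseteq> (\<lambda>((a,b),m). ((a, b - 1), m)) ` {k. g k \<noteq> 0}"
  proof
    fix k assume "k \<in> {k. mp_dv g k \<noteq> 0}"
    then obtain a b m where k: "k = ((a,b),m)" "g ((a,b+1),m) \<noteq> 0" unfolding mp_dv_def
      by (cases k) auto
    then show "k \<in> (\<lambda>((a,b),m). ((a, b - 1), m)) ` {k. g k \<noteq> 0}"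
      by (intro image_eqI[of _ _ "((a,b+1),m)"]) auto
  qed
  thus ?thesis using a finite_subset by blast
qed

lemma fin_dubar: "finite {k. g k \<noteq> 0} \<Longrightarrow> finite {k. mp_dubar g k \<noteq> 0}"
proof -
  assume a: "finite {k. g k \<noteq> 0}"
  have "{k. mp_dubar g k \<noteq> 0} \<subseteq> (\<lambda>(n,(d,e)). (n,(d - 1, e))) ` {k. g k \<noteq> 0}"
  proof
    fix k assume "k \<in> {k. mp_dubar g k \<noteq> 0}"
    then obtain n d e where k: "k = (n,(d,e))" "g (n,(d+1,e)) \<noteq> 0" unfolding mp_dubar_def
      by (cases k) auto
    then show "k \<in> (\<lambda>(n,(d,e)). (n,(d - 1, e))) ` {k. g k \<noteq> 0}"
      by (intro image_eqI[of _ _ "(n,(d+1,e))"]) auto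
  qed
  thus ?thesis using a finite_subset by blast
qed

lemma fin_dvbar: "finite {k. g k \<noteq> 0} \<Longrightarrow> finite {k. mp_dvbar g k \<noteq> 0}"
proof -
  assume a: "finite {k. g k \<noteq> 0}"
  have "{k. mp_dvbar g k \<noteq> 0} \<subseteq> (\<lambda>(n,(d,e)). (n,(d, e - 1))) ` {k. g k \<noteq> 0}"
  proof
    fix k assume "k \<in> {k. mp_dvbar g k \<noteq> 0}"
    then obtain n d e where k: "k = (n,(d,e))" "g (n,(d,e+1)) \<noteq> 0" unfolding mp_dvbar_def
      by (cases k) auto
    then show "k \<in> (\<lambda>(n,(d,e)). (n,(d, e - 1))) ` {k. g k \<noteq> 0}"
      by (intro image_eqI[of _ _ "(n,(d,e+1))"]) auto
  qed
  thus ?thesis using a finite_subset by blast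
qed

definition uax :: "(nat \<times> nat) \<times> (nat \<times> nat) \<Rightarrow> bool" where
  "uax k \<longleftrightarrow> fst (fst k) = 0 \<and> fst (snd k) = 0"
definition vax :: "(nat \<times> nat) \<times> (nat \<times> nat) \<Rightarrow> bool" where
  "vax k \<longleftrightarrow> snd (fst k) = 0 \<and> snd (snd k) = 0"

lemma eval_uax:
  assumes "finite {k. g k \<noteq> 0}" "finite {k. h k \<noteq> 0}"
    "\<forall>k. uax k \<longrightarrow> g k = h k" "\<forall>k. \<not> uax k \<longrightarrow> h k = 0"
  shows "mp_eval g (0, v) = mp_eval h (1, v)"
proof -
  let ?A = "{k. g k \<noteq> 0} \<union> {k. h k \<noteq> 0}"
  have "mp_eval g (0, v) = (\<Sum>k\<in>?A. tm g (0,v) k)" by (rule eval_sum) (use assms in auto)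
  also have "\<dots> = (\<Sum>k\<in>?A. tm h (1,v) k)"
  proof (rule sum.cong)
    fix k
    show "tm g (0,v) k = tm h (1,v) k"
    proof (cases "uax k")
      case True
      hence "g k = h k" using assms(3) by blast
      thus ?thesis using True unfolding tm_def uax_def by simp
    next
      case False
      hence "fst (fst k) \<noteq> 0 \<or> fst (snd k) \<noteq> 0" unfolding uax_def by auto
      hence "tm g (0,v) k = 0" unfolding tm_def by (elim disjE) simp_all
      moreover have "h k = 0" using assms(4) False by blast
      ultimately show ?thesis unfolding tm_def by simp
    qed
  qed simp
  also have "\<dots> = mp_eval h (1, v)" by (rule eval_sum[symmetric]) (use assms in auto)
  finally show ?thesis .
qed

lemma eval_vax:
  assumes "finite {k. g k \<noteq> 0}" "finite {k. h k \<noteq> 0}"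
    "\<forall>k. vax k \<longrightarrow> g k = h k" "\<forall>k. \<not> vax k \<longrightarrow> h k = 0"
  shows "mp_eval g (u, 0) = mp_eval h (u, 1)"
proof -
  let ?A = "{k. g k \<noteq> 0} \<union> {k. h k \<noteq> 0}"
  have "mp_eval g (u, 0) = (\<Sum>k\<in>?A. tm g (u,0) k)" by (rule eval_sum) (use assms in auto)
  also have "\<dots> = (\<Sum>k\<in>?A. tm h (u,1) k)"
  proof (rule sum.cong)
    fix k
    show "tm g (u,0) k = tm h (u,1) k"
    proof (cases "vax k")
      case True
      hence "g k = h k" using assms(3) by blast
      thus ?thesis using True unfolding tm_def vax_def by simp
    next
      case False
      hence "snd (fst k) \<noteq> 0 \<or> snd (snd k) \<noteq> 0" unfolding vax_def by auto
      hence "tm g (u,0) k = 0" unfolding tm_def by (elim disjE) simp_all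
      moreover have "h k = 0" using assms(4) False by blast
      ultimately show ?thesis unfolding tm_def by simp
    qed
  qed simp
  also have "\<dots> = mp_eval h (u, 1)" by (rule eval_sum[symmetric]) (use assms in auto)
  finally show ?thesis .
qed



lemma axis_crit_y:
  assumes fin: "finite {k. f k \<noteq> 0}"
    and H: "\<forall>y::nat. ((0::real), real y) \<in> face f P \<longleftrightarrow> y = b0"
    and oka: "crit (restr f {((0::real), real b0)}) \<inter> torus2 = {}"
    and z: "z \<in> crit (restr f (face f P))" "fst z = 0" "snd z \<noteq> 0"
  shows False
proof -
  define g where "g = restr f (face f P)"
  define h where "h = restr f {((0::real), real b0)}"
  have fg: "finite {k. g k \<noteq> 0}" and fh: "finite {k. h k \<noteq> 0}"
    unfolding g_def h_def using fin_restr[OF fin] by auto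
  have gh: "g k = h k" if "uax k" for k
  proof -
    obtain a b d e :: nat where k: "k = ((a,b),(d,e))" by (metis prod.collapse)
    have "a = 0" "d = 0" using that k unfolding uax_def by auto
    thus ?thesis unfolding g_def h_def restr_def k using H[rule_format, of "b+e"] by (auto simp del: of_nat_add)
  qed
  have h0: "h k = 0" if "\<not> uax k" for k
  proof -
    obtain a b d e :: nat where k: "k = ((a,b),(d,e))" by (metis prod.collapse)
    have "a + d \<noteq> 0" using that k unfolding uax_def by auto
    thus ?thesis unfolding h_def restr_def k by auto
  qed
  have dv1: "\<forall>k. uax k \<longrightarrow> mp_dv g k = mp_dv h k"
  proof (intro allI impI)
    fix k assume u: "uax k"
    obtain a b :: nat and m :: "nat \<times> nat" where k: "k = ((a,b),m)" by (metis prod.collapse)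
    have "uax ((a,b+1),m)" using u k unfolding uax_def by auto
    thus "mp_dv g k = mp_dv h k" unfolding mp_dv_def k using gh by simp
  qed
  have dv2: "\<forall>k. \<not> uax k \<longrightarrow> mp_dv h k = 0"
  proof (intro allI impI)
    fix k assume u: "\<not> uax k"
    obtain a b :: nat and m :: "nat \<times> nat" where k: "k = ((a,b),m)" by (metis prod.collapse)
    have "\<not> uax ((a,b+1),m)" using u k unfolding uax_def by auto
    thus "mp_dv h k = 0" unfolding mp_dv_def k using h0 by simp
  qed
  have dvb1: "\<forall>k. uax k \<longrightarrow> mp_dvbar g k = mp_dvbar h k"
  proof (intro allI impI)
    fix k assume u: "uax k"
    obtain d e :: nat and n :: "nat \<times> nat" where k: "k = (n,(d,e))" by (metis prod.collapse)
    have "uax (n,(d,e+1))" using u k unfolding uax_def by auto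
    thus "mp_dvbar g k = mp_dvbar h k" unfolding mp_dvbar_def k using gh by simp
  qed
  have dvb2: "\<forall>k. \<not> uax k \<longrightarrow> mp_dvbar h k = 0"
  proof (intro allI impI)
    fix k assume u: "\<not> uax k"
    obtain d e :: nat and n :: "nat \<times> nat" where k: "k = (n,(d,e))" by (metis prod.collapse)
    have "\<not> uax (n,(d,e+1))" using u k unfolding uax_def by auto
    thus "mp_dvbar h k = 0" unfolding mp_dvbar_def k using h0 by simp
  qed
  have du0: "mp_du h = (\<lambda>_. 0)"
  proof
    fix k
    obtain a b :: nat and m :: "nat \<times> nat" where k: "k = ((a,b),m)" by (metis prod.collapse)
    have "\<not> uax ((a+1,b),m)" unfolding uax_def by auto
    thus "mp_du h k = 0" unfolding mp_du_def k using h0 by simp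
  qed
  have dub0: "mp_dubar h = (\<lambda>_. 0)"
  proof
    fix k
    obtain d e :: nat and n :: "nat \<times> nat" where k: "k = (n,(d,e))" by (metis prod.collapse)
    have "\<not> uax (n,(d+1,e))" unfolding uax_def by auto
    thus "mp_dubar h k = 0" unfolding mp_dubar_def k using h0 by simp
  qed
  obtain v where zv: "z = (0, v)" and v0: "v \<noteq> 0" using z by (metis prod.collapse)
  have e1: "mp_eval (mp_dv g) (0, v) = mp_eval (mp_dv h) (1, v)"
    by (rule eval_uax[OF fin_dv[OF fg] fin_dv[OF fh] dv1 dv2])
  have e2: "mp_eval (mp_dvbar g) (0, v) = mp_eval (mp_dvbar h) (1, v)"
    by (rule eval_uax[OF fin_dvbar[OF fg] fin_dvbar[OF fh] dvb1 dvb2])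
  have "(cmod (mp_eval (mp_dv g) (0,v)))\<^sup>2 - (cmod (mp_eval (mp_dvbar g) (0,v)))\<^sup>2 = 0"
    using z(1) zv unfolding crit_def g_def by auto
  hence "(1, v) \<in> crit h" unfolding crit_def using e1 e2 by (simp add: du0 dub0 eval_zero)
  moreover have "(1, v) \<in> torus2" unfolding torus2_def using v0 by simp
  ultimately show False using oka unfolding h_def by blast
qed

lemma axis_crit_x:
  assumes fin: "finite {k. f k \<noteq> 0}"
    and H: "\<forall>y::nat. (real y, (0::real)) \<in> face f P \<longleftrightarrow> y = b0"
    and oka: "crit (restr f {(real b0, (0::real))}) \<inter> torus2 = {}"
    and z: "z \<in> crit (restr f (face f P))" "snd z = 0" "fst z \<noteq> 0"
  shows False
proof -
  define g where "g = restr f (face f P)"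
  define h where "h = restr f {(real b0, (0::real))}"
  have fg: "finite {k. g k \<noteq> 0}" and fh: "finite {k. h k \<noteq> 0}"
    unfolding g_def h_def using fin_restr[OF fin] by auto
  have gh: "g k = h k" if "vax k" for k
  proof -
    obtain a b d e :: nat where k: "k = ((a,b),(d,e))" by (metis prod.collapse)
    have "b = 0" "e = 0" using that k unfolding vax_def by auto
    thus ?thesis unfolding g_def h_def restr_def k using H[rule_format, of "a+d"] by (auto simp del: of_nat_add)
  qed
  have h0: "h k = 0" if "\<not> vax k" for k
  proof -
    obtain a b d e :: nat where k: "k = ((a,b),(d,e))" by (metis prod.collapse)
    have "b + e \<noteq> 0" using that k unfolding vax_def by auto
    thus ?thesis unfolding h_def restr_def k by auto
  qed
  have du1: "\<forall>k. vax k \<longrightarrow> mp_du g k = mp_du h k"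
  proof (intro allI impI)
    fix k assume u: "vax k"
    obtain a b :: nat and m :: "nat \<times> nat" where k: "k = ((a,b),m)" by (metis prod.collapse)
    have "vax ((a+1,b),m)" using u k unfolding vax_def by auto
    thus "mp_du g k = mp_du h k" unfolding mp_du_def k using gh by simp
  qed
  have du2: "\<forall>k. \<not> vax k \<longrightarrow> mp_du h k = 0"
  proof (intro allI impI)
    fix k assume u: "\<not> vax k"
    obtain a b :: nat and m :: "nat \<times> nat" where k: "k = ((a,b),m)" by (metis prod.collapse)
    have "\<not> vax ((a+1,b),m)" using u k unfolding vax_def by auto
    thus "mp_du h k = 0" unfolding mp_du_def k using h0 by simp
  qed
  have dub1: "\<forall>k. vax k \<longrightarrow> mp_dubar g k = mp_dubar h k"
  proof (intro allI impI)
    fix k assume u: "vax k"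
    obtain d e :: nat and n :: "nat \<times> nat" where k: "k = (n,(d,e))" by (metis prod.collapse)
    have "vax (n,(d+1,e))" using u k unfolding vax_def by auto
    thus "mp_dubar g k = mp_dubar h k" unfolding mp_dubar_def k using gh by simp
  qed
  have dub2: "\<forall>k. \<not> vax k \<longrightarrow> mp_dubar h k = 0"
  proof (intro allI impI)
    fix k assume u: "\<not> vax k"
    obtain d e :: nat and n :: "nat \<times> nat" where k: "k = (n,(d,e))" by (metis prod.collapse)
    have "\<not> vax (n,(d+1,e))" using u k unfolding vax_def by auto
    thus "mp_dubar h k = 0" unfolding mp_dubar_def k using h0 by simp
  qed
  have dv0: "mp_dv h = (\<lambda>_. 0)"
  proof
    fix k
    obtain a b :: nat and m :: "nat \<times> nat" where k: "k = ((a,b),m)" by (metis prod.collapse)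
    have "\<not> vax ((a,b+1),m)" unfolding vax_def by auto
    thus "mp_dv h k = 0" unfolding mp_dv_def k using h0 by simp
  qed
  have dvb0: "mp_dvbar h = (\<lambda>_. 0)"
  proof
    fix k
    obtain d e :: nat and n :: "nat \<times> nat" where k: "k = (n,(d,e))" by (metis prod.collapse)
    have "\<not> vax (n,(d,e+1))" unfolding vax_def by auto
    thus "mp_dvbar h k = 0" unfolding mp_dvbar_def k using h0 by simp
  qed
  obtain u where zu: "z = (u, 0)" and u0: "u \<noteq> 0" using z by (metis prod.collapse)
  have e1: "mp_eval (mp_du g) (u, 0) = mp_eval (mp_du h) (u, 1)"
    by (rule eval_vax[OF fin_du[OF fg] fin_du[OF fh] du1 du2])
  have e2: "mp_eval (mp_dubar g) (u, 0) = mp_eval (mp_dubar h) (u, 1)"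
    by (rule eval_vax[OF fin_dubar[OF fg] fin_dubar[OF fh] dub1 dub2])
  have "(cmod (mp_eval (mp_du g) (u,0)))\<^sup>2 - (cmod (mp_eval (mp_dubar g) (u,0)))\<^sup>2 = 0"
    using z(1) zu unfolding crit_def g_def by auto
  hence "(u, 1) \<in> crit h" unfolding crit_def using e1 e2 by (simp add: dv0 dvb0 eval_zero)
  moreover have "(u, 1) \<in> torus2" unfolding torus2_def using u0 by simp
  ultimately show False using oka unfolding h_def by blast
qed



theorem mainTheorem12:
  fixes f :: mpoly
  assumes "finite {k. f k \<noteq> 0}"
    and "\<exists>P. edge_weight f P"
    and "convenient f"
    and "strongly_newton_nondeg f"
  shows "strongly_inner_nondeg_boundary f"
proof -
  note fin = assms(1)
  have oka: "\<And>D. compact_face f D \<Longrightarrow> crit (restr f D) \<inter> torus2 = {}"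
    using assms(4) unfolding strongly_newton_nondeg_def by blast
  have edge: "crit (restr f (face f P)) \<inter> torus2 = {}" if ewt: "edge_weight f P" for P
  proof -
    have "compact_face f (face f P)" using ewt unfolding edge_weight_def compact_face_def by blast
    thus ?thesis by (rule oka)
  qed
  have vert: "crit (restr f {w}) \<inter> torus2 = {}" if nv: "nonextreme_vertex f w" for w
  proof -
    obtain P Q where PQ: "edge_weight f P" "edge_weight f Q" "P \<noteq> Q" "w \<in> face f P" "w \<in> face f Q"
      using nv unfolding nonextreme_vertex_def by blast
    obtain R where "weight R" "face f R = {w}"
      using face_two_weights[of P Q w f] PQ unfolding edge_weight_def by blast
    hence "compact_face f {w}" unfolding compact_face_def by (metis insert_not_empty)
    thus ?thesis by (rule oka)
  qed
  have facesub: "\<And>D. compact_face f D \<Longrightarrow> D \<subseteq> newton_plus f"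
    unfolding compact_face_def face_def by auto
  have first: "crit (restr f (face f P)) \<inter> {z. snd z \<noteq> 0} = {}" if fe: "first_edge f P" for P
  proof -
    obtain D b where D: "compact_face f D" "(0, real b) \<in> D"
      using assms(3) unfolding convenient_def by blast
    hence yb: "(0, real b) \<in> newton_plus f" using facesub by blast
    obtain b0 where b0: "(0,b0) \<in> supp f" "\<forall>y. (0,y) \<in> supp f \<longrightarrow> b0 \<le> y" "(0, real b0) \<in> face f P"
      using first_edge_vertex[OF fin fe yb] by blast
    have "compact_face f {(0, real b0)}"
      using vertex_face_y[OF b0(1) b0(2)] unfolding compact_face_def by (metis insert_not_empty)
    hence okv: "crit (restr f {(0, real b0)}) \<inter> torus2 = {}" by (rule oka)
    have ew: "edge_weight f P" using fe unfolding first_edge_def by simp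
    have p2: "snd P > 0" using ew unfolding edge_weight_def weight_def by simp
    have H: "\<forall>y::nat. ((0::real), real y) \<in> face f P \<longleftrightarrow> y = b0"
    proof (intro allI iffI)
      fix y :: nat assume y: "(0, real y) \<in> face f P"
      have "wdot P (0, real y) \<le> wdot P (0, real b0)" "wdot P (0, real b0) \<le> wdot P (0, real y)"
        using y b0(3) unfolding face_def by auto
      hence "real (snd P) * real y = real (snd P) * real b0" unfolding wdot_def by (auto simp del: of_nat_mult)
      thus "y = b0" using p2 by (metis mult_cancel_left of_nat_eq_iff of_nat_0_less_iff less_irrefl)
    next
      fix y :: nat assume "y = b0" thus "(0, real y) \<in> face f P" using b0(3) by simp
    qed
    show ?thesis
    proof (rule ccontr)
      assume "\<not> ?thesis"
      then obtain z where z: "z \<in> crit (restr f (face f P))" "snd z \<noteq> 0" by blast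
      show False
      proof (cases "fst z = 0")
        case True
        show False by (rule axis_crit_y[OF fin H okv z(1) True z(2)])
      next
        case False
        hence "z \<in> torus2" using z unfolding torus2_def by simp
        thus False using edge[OF ew] z by blast
      qed
    qed
  qed
  have last: "crit (restr f (face f P)) \<inter> {z. fst z \<noteq> 0} = {}" if fe: "last_edge f P" for P
  proof -
    obtain D b where D: "compact_face f D" "(real b, 0) \<in> D"
      using assms(3) unfolding convenient_def by blast
    hence yb: "(real b, 0) \<in> newton_plus f" using facesub by blast
    obtain b0 where b0: "(b0,0) \<in> supp f" "\<forall>y. (y,0) \<in> supp f \<longrightarrow> b0 \<le> y" "(real b0, 0) \<in> face f P"
      using last_edge_vertex[OF fin fe yb] by blast
    have "compact_face f {(real b0, 0)}"
      using vertex_face_x[OF b0(1) b0(2)] unfolding compact_face_def by (metis insert_not_empty)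
    hence okv: "crit (restr f {(real b0, 0)}) \<inter> torus2 = {}" by (rule oka)
    have ew: "edge_weight f P" using fe unfolding last_edge_def by simp
    have p1: "fst P > 0" using ew unfolding edge_weight_def weight_def by simp
    have H: "\<forall>y::nat. (real y, (0::real)) \<in> face f P \<longleftrightarrow> y = b0"
    proof (intro allI iffI)
      fix y :: nat assume y: "(real y, 0) \<in> face f P"
      have "wdot P (real y, 0) \<le> wdot P (real b0, 0)" "wdot P (real b0, 0) \<le> wdot P (real y, 0)"
        using y b0(3) unfolding face_def by auto
      hence "real (fst P) * real y = real (fst P) * real b0" unfolding wdot_def by (auto simp del: of_nat_mult)
      thus "y = b0" using p1 by (metis mult_cancel_left of_nat_eq_iff of_nat_0_less_iff less_irrefl)
    next
      fix y :: nat assume "y = b0" thus "(real y, 0) \<in> face f P" using b0(3) by simp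
    qed
    show ?thesis
    proof (rule ccontr)
      assume "\<not> ?thesis"
      then obtain z where z: "z \<in> crit (restr f (face f P))" "fst z \<noteq> 0" by blast
      show False
      proof (cases "snd z = 0")
        case True
        show False by (rule axis_crit_x[OF fin H okv z(1) True z(2)])
      next
        case False
        hence "z \<in> torus2" using z unfolding torus2_def by simp
        thus False using edge[OF ew] z by blast
      qed
    qed
  qed
  show ?thesis unfolding strongly_inner_nondeg_boundary_def
    using first last edge vert by blast
qed


end
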